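(* Let $u:\mathbb{T}\to\mathbb{R}$ be smooth with finitely many critical points, let $A$ be the zero set of $u'$, let $\eta>0$ be sufficiently small, let $\tilde v>0$ be deterministic and $\omega>0$. Then, with parameters $(\nu,t,y)$ ranging over $\nu\in(0,1]$, $t\in(0,\nu^{-1}]$, $y\in\mathbb{T}$ (and with the threshold on $\epsilon$ depending only on $\omega,u,\tilde v,\eta$), $$\det(M_t)(y)\le\epsilon\,\tilde v\,t^{\omega+3}\nu^{\omega}\ \Rightarrow_\epsilon\ \sup_{s\le t}\mathrm{dist}(y+\sqrt\nu B_s,A)\le\eta .$$ Moreover, suppose $u$ has a critical point of order $n$ at $y_0$ and $\eta=\eta(y_0)>0$ is small enough that for $|z-y_0|\le\eta$, $$c_1|z-y_0|^n\le|u'(z)|\le c_2|z-y_0|^n,\qquad c_3|z-y_0|^{n-1}\le|u''(z)|\le c_4|z-y_0|^{n-1}$$ for some constants $c_1,\dots,c_4>0$. Then for $|y-y_0|<\eta$, $$\det(M_t)(y)\le\epsilon\,\tilde v\,t^{\omega+3}\nu^{\omega}\ \Rightarrow_\epsilon\ h(y,\nu,t)\le c(u)\sup_{s\in[0,t]}|y-y_0+\sqrt\nu B_s|^{n-1},$$ with $c(u)$ a constant depending only on $u$.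
   Context: $(B_t)$ is a standard Brownian motion; $u',u''$ are viewed as $2\pi$-periodic functions on $\mathbb{R}$ and distances are taken on $\mathbb{T}$. $\det(M_t)(y):=\int_0^t\big(\int_r^t u'(y+\sqrt\nu B_s)\,ds-\frac1t\int_0^t\int_m^t u'(y+\sqrt\nu B_s)\,ds\,dm\big)^2dr$ and $h(y,\nu,t)=\sup_{s,z\in[0,t],\,\tau\in[0,1]}|u''(y+\sqrt\nu(\tau B_s+(1-\tau)B_z))|$. A critical point $y_0$ has order $n\ge1$ if $u'(y_0)=\dots=u^{(n)}(y_0)=0\neq u^{(n+1)}(y_0)$. Almost-false terminology: a family of events $A^\zeta_\epsilon$ is almost false if for every $p>0$ there exist $C_p,\epsilon_0>0$ independent of the parameters $\zeta$ with $\mathbb P(A^\zeta_\epsilon)\le C_p\epsilon^p$ for all $\zeta$ and $\epsilon\in(0,\epsilon_0]$; $A\Rightarrow_\epsilon B$ means $A\setminus B$ is almost false. *)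

theory Defs
  imports "HOL-Probability.Probability"
begin

definition std_BM :: "'a measure \<Rightarrow> (real \<Rightarrow> 'a \<Rightarrow> real) \<Rightarrow> bool" where
  "std_BM M B \<longleftrightarrow>
     prob_space M \<and>
     (\<forall>t\<ge>0. B t \<in> borel_measurable M) \<and>
     (\<forall>\<omega>\<in>space M. B 0 \<omega> = 0 \<and> continuous_on {0..} (\<lambda>t. B t \<omega>)) \<and>
     (\<forall>s t. 0 \<le> s \<and> s < t \<longrightarrow>
        distributed M lborel (\<lambda>\<omega>. B t \<omega> - B s \<omega>)
          (\<lambda>x. ennreal (normal_density 0 (sqrt (t - s)) x))) \<and>
     (\<forall>(n::nat) (ts::nat \<Rightarrow> real). (\<forall>i<n. 0 \<le> ts i \<and> ts i < ts (Suc i)) \<longrightarrow>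
        prob_space.indep_vars M (\<lambda>_. borel)
          (\<lambda>i \<omega>. B (ts (Suc i)) \<omega> - B (ts i) \<omega>) {..<n})"

text \<open>Smooth 2pi-periodic real function (a smooth function on the torus).\<close>
definition smooth_periodic :: "(real \<Rightarrow> real) \<Rightarrow> bool" where
  "smooth_periodic u \<longleftrightarrow>
     (\<forall>k x. (deriv ^^ k) u differentiable (at x)) \<and> (\<forall>x. u (x + 2 * pi) = u x)"

definition tdist :: "real \<Rightarrow> real \<Rightarrow> real" where
  "tdist x y = (INF k::int. \<bar>x - y - 2 * pi * real_of_int k\<bar>)"

definition detM :: "(real \<Rightarrow> real) \<Rightarrow> (real \<Rightarrow> 'a \<Rightarrow> real) \<Rightarrow> real \<Rightarrow> real \<Rightarrow> real \<Rightarrow> 'a \<Rightarrow> real" where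
  "detM u B \<nu> t y \<omega> =
     integral {0..t} (\<lambda>r.
       (integral {r..t} (\<lambda>s. deriv u (y + sqrt \<nu> * B s \<omega>))
        - (1 / t) * integral {0..t} (\<lambda>m. integral {m..t} (\<lambda>s. deriv u (y + sqrt \<nu> * B s \<omega>))))\<^sup>2)"

definition hfun :: "(real \<Rightarrow> real) \<Rightarrow> (real \<Rightarrow> 'a \<Rightarrow> real) \<Rightarrow> real \<Rightarrow> real \<Rightarrow> real \<Rightarrow> 'a \<Rightarrow> real" where
  "hfun u B y \<nu> t \<omega> =
     Sup ((\<lambda>(s, z, \<tau>). \<bar>deriv (deriv u) (y + sqrt \<nu> * (\<tau> * B s \<omega> + (1 - \<tau>) * B z \<omega>))\<bar>)
          ` ({0..t} \<times> {0..t} \<times> {0..1}))"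

text \<open>Almost false family of events indexed by parameters in Z and epsilon > 0.
  The probability bound is stated via a measurable superset (outer probability),
  so no measurability of the events needs to be assumed.\<close>
definition almost_false :: "'a measure \<Rightarrow> ('z \<Rightarrow> real \<Rightarrow> 'a set) \<Rightarrow> 'z set \<Rightarrow> bool" where
  "almost_false M A Z \<longleftrightarrow>
     (\<forall>p>0. \<exists>C \<epsilon>0. C > 0 \<and> \<epsilon>0 > 0 \<and>
        (\<forall>\<zeta>\<in>Z. \<forall>\<epsilon>. 0 < \<epsilon> \<and> \<epsilon> \<le> \<epsilon>0 \<longrightarrow>
           (\<exists>E\<in>sets M. A \<zeta> \<epsilon> \<subseteq> E \<and> measure M E \<le> C * \<epsilon> powr p)))"

definition implies_eps :: "'a measure \<Rightarrow> ('z \<Rightarrow> real \<Rightarrow> 'a set) \<Rightarrow> ('z \<Rightarrow> real \<Rightarrow> 'a set) \<Rightarrow> 'z set \<Rightarrow> bool" where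
  "implies_eps M A B Z \<longleftrightarrow> almost_false M (\<lambda>\<zeta> \<epsilon>. A \<zeta> \<epsilon> - B \<zeta> \<epsilon>) Z"

end

theory Submission
  imports Defs
begin


definition dd :: "nat \<Rightarrow> real \<Rightarrow> real" where
  "dd k x = of_int \<lfloor>x * 2^k\<rfloor> / 2^k"

lemma dd_range: assumes "0 \<le> x" "x \<le> 1" shows "0 \<le> dd k x" "dd k x \<le> 1"
proof -
  have "0 \<le> \<lfloor>x * 2^k\<rfloor>" using assms by simp
  then show "0 \<le> dd k x" by (simp add: dd_def)
  have "of_int \<lfloor>x * 2^k\<rfloor> \<le> x * 2^k" by simp
  also have "\<dots> \<le> 2^k" using assms by simp
  finally show "dd k x \<le> 1" by (simp add: dd_def)
qed

lemma dd_close: "\<bar>dd k x - x\<bar> \<le> 1 / 2^k"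
proof -
  have "of_int \<lfloor>x * 2^k\<rfloor> \<le> x * 2^k" "x * 2^k < of_int \<lfloor>x * 2^k\<rfloor> + 1" by auto
  then have "\<bar>of_int \<lfloor>x * 2^k\<rfloor> - x * 2^k\<bar> \<le> 1" by linarith
  then have "\<bar>of_int \<lfloor>x * 2^k\<rfloor> - x * 2^k\<bar> / 2^k \<le> 1 / 2^k" by (simp add: divide_right_mono)
  moreover have "dd k x - x = (of_int \<lfloor>x * 2^k\<rfloor> - x * 2^k) / 2^k"
    by (simp add: dd_def field_simps)
  ultimately show ?thesis by (simp add: abs_divide)
qed

lemma dd_lim: "(\<lambda>n. dd n x) \<longlonglongrightarrow> x"
proof -
  have "(\<lambda>n. 1 / (2::real)^n) \<longlonglongrightarrow> 0"
    by (simp add: LIMSEQ_divide_realpow_zero)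
  then have "(\<lambda>n. dd n x - x) \<longlonglongrightarrow> 0"
    by (rule Lim_null_comparison[rotated]) (simp add: dd_close)
  then show ?thesis by (simp add: LIM_zero_cancel)
qed

lemma dd_step:
  fixes g :: "real \<Rightarrow> real"
  assumes x: "0 \<le> x" "x \<le> 1"
    and inc: "\<And>j::nat. j < 2^(Suc n) \<Longrightarrow> \<bar>g (real (Suc j) / 2^(Suc n)) - g (real j / 2^(Suc n))\<bar> \<le> b"
  shows "\<bar>g (dd (Suc n) x) - g (dd n x)\<bar> \<le> b"
proof -
  define j where "j = \<lfloor>x * 2^(Suc n)\<rfloor>"
  have j0: "0 \<le> j" using x by (simp add: j_def)
  have "of_int j \<le> x * 2^(Suc n)" by (simp add: j_def)
  also have "\<dots> \<le> 2^(Suc n)" using x by simp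
  finally have "real_of_int j \<le> real_of_int (2^(Suc n))" by simp
  then have j1: "j \<le> 2^(Suc n)" by (simp only: of_int_le_iff)
  have b0: "0 \<le> b" using inc[of 0] by (meson abs_ge_zero order_trans zero_less_power zero_less_numeral)
  have hf: "\<lfloor>x * 2^n\<rfloor> = j div 2"
  proof -
    have "x * 2^n = x * 2^(Suc n) / real_of_int 2" by simp
    then show ?thesis unfolding j_def using floor_divide_real_eq_div[of 2 "x * 2^(Suc n)"] by simp
  qed
  show ?thesis
  proof (cases "even j")
    case True
    then have "j = 2 * (j div 2)" by simp
    then have "dd (Suc n) x = dd n x"
      unfolding dd_def hf j_def[symmetric]
      by (metis (no_types, lifting) nonzero_mult_divide_mult_cancel_left of_int_mult of_int_numeral
          power_Suc zero_neq_numeral)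
    then show ?thesis using b0 by simp
  next
    case False
    then have jo: "j = 2 * (j div 2) + 1" by simp
    define i where "i = nat (j - 1)"
    have j1': "1 \<le> j" using j0 False by presburger
    have ij: "real i = of_int j - 1" using j1' by (simp add: i_def of_nat_nat)
    have ilt: "i < 2^(Suc n)"
    proof -
      have "j \<noteq> 2^(Suc n)" using False by auto
      then have "j < 2^Suc n" using j1 by simp
      then have "real_of_int j < real_of_int (2^Suc n)" by (simp only: of_int_less_iff)
      then have "real i < real (2^Suc n)" using ij by simp
      then show ?thesis by (simp only: of_nat_less_iff)
    qed
    have e1: "dd (Suc n) x = real (Suc i) / 2^(Suc n)"
      unfolding dd_def j_def[symmetric] using ij by simp
    have e2: "dd n x = real i / 2^(Suc n)"
    proof -
      have "real_of_int j = real_of_int (2 * (j div 2) + 1)" using arg_cong[OF jo, of real_of_int] .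
      then have "real_of_int (j div 2) = (of_int j - 1) / 2" by simp
      then show ?thesis unfolding dd_def hf using ij by (simp add: field_simps)
    qed
    show ?thesis using inc[OF ilt] e1 e2 by simp
  qed
qed

lemma dd_adj:
  fixes g :: "real \<Rightarrow> real"
  assumes x: "0 \<le> x" "x \<le> 1" and y: "0 \<le> y" "y \<le> 1"
    and fl: "\<lfloor>x * 2^m\<rfloor> = \<lfloor>y * 2^m\<rfloor> + 1"
    and inc: "\<And>j::nat. j < 2^m \<Longrightarrow> \<bar>g (real (Suc j) / 2^m) - g (real j / 2^m)\<bar> \<le> b"
  shows "\<bar>g (dd m x) - g (dd m y)\<bar> \<le> b"
proof -
  define i where "i = nat \<lfloor>y * 2^m\<rfloor>"
  have y0: "0 \<le> \<lfloor>y * 2^m\<rfloor>" using y by simp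
  have iy: "real i = of_int \<lfloor>y * 2^m\<rfloor>" using y0 by (simp add: i_def of_nat_nat)
  have "of_int \<lfloor>x * 2^m\<rfloor> \<le> x * 2^m" by simp
  also have "\<dots> \<le> 2^m" using x by simp
  finally have "real i + 1 \<le> 2^m" using fl iy by simp
  then have "real i < 2^m" by linarith
  then have ilt: "i < 2^m" by (metis of_nat_less_iff of_nat_numeral of_nat_power)
  have e1: "dd m x = real (Suc i) / 2^m" unfolding dd_def fl using iy by simp
  have e2: "dd m y = real i / 2^m" unfolding dd_def using iy by simp
  show ?thesis using inc[OF ilt] e1 e2 by simp
qed

lemma chain:
  fixes g :: "real \<Rightarrow> real"
  assumes cont: "continuous_on {0..1} g"
    and inc: "\<And>k j. m \<le> k \<Longrightarrow> j < 2^k \<Longrightarrow> \<bar>g (real (Suc j) / 2^k) - g (real j / 2^k)\<bar> \<le> bnd k"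
    and S: "\<And>n. (\<Sum>k\<in>{m<..n}. bnd k) \<le> S"
    and x: "0 \<le> x" "x \<le> 1" and y: "0 \<le> y" "y \<le> 1" and xy: "\<bar>x - y\<bar> \<le> 1 / 2^m"
  shows "\<bar>g x - g y\<bar> \<le> bnd m + 2 * S"
proof -
  have part1: "\<bar>g (dd n z) - g (dd m z)\<bar> \<le> (\<Sum>k\<in>{m<..n}. bnd k)"
    if z: "0 \<le> z" "z \<le> 1" and n: "m \<le> n" for z n
    using n
  proof (induction n rule: dec_induct)
    case base
    then show ?case by simp
  next
    case (step n)
    have st: "\<bar>g (dd (Suc n) z) - g (dd n z)\<bar> \<le> bnd (Suc n)"
      by (rule dd_step[OF z]) (rule inc, use step in auto)
    have "{m<..Suc n} = insert (Suc n) {m<..n}" using step by auto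
    then have "(\<Sum>k\<in>{m<..Suc n}. bnd k) = bnd (Suc n) + (\<Sum>k\<in>{m<..n}. bnd k)" by simp
    then show ?case using st step.IH by linarith
  qed
  have part2: "\<bar>g z - g (dd m z)\<bar> \<le> S" if z: "0 \<le> z" "z \<le> 1" for z
  proof -
    have "(\<lambda>n. g (dd n z)) \<longlonglongrightarrow> g z"
      by (rule continuous_on_tendsto_compose[OF cont dd_lim]) (use z dd_range[OF z] in auto)
    then have lim: "(\<lambda>n. \<bar>g (dd n z) - g (dd m z)\<bar>) \<longlonglongrightarrow> \<bar>g z - g (dd m z)\<bar>"
      by (intro tendsto_intros)
    show ?thesis
      by (rule LIMSEQ_le_const2[OF lim]) (use part1[OF z] S order_trans in blast)
  qed
  have fl: "\<lfloor>x * 2^m\<rfloor> = \<lfloor>y * 2^m\<rfloor> \<or> \<lfloor>x * 2^m\<rfloor> = \<lfloor>y * 2^m\<rfloor> + 1 \<or> \<lfloor>y * 2^m\<rfloor> = \<lfloor>x * 2^m\<rfloor> + 1"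
  proof -
    have "\<bar>x * 2^m - y * 2^m\<bar> \<le> 1"
    proof -
      have "\<bar>x * 2^m - y * 2^m\<bar> = \<bar>x - y\<bar> * 2^m" by (simp add: abs_mult left_diff_distrib[symmetric])
      also have "\<dots> \<le> 1 / 2^m * 2^m" using xy by (intro mult_right_mono) auto
      finally show ?thesis by simp
    qed
    then show ?thesis by linarith
  qed
  have b0: "0 \<le> bnd m" using inc[of m 0] by (meson abs_ge_zero order_trans order_refl zero_less_power zero_less_numeral)
  have mid: "\<bar>g (dd m x) - g (dd m y)\<bar> \<le> bnd m"
  proof -
    { assume "\<lfloor>x * 2^m\<rfloor> = \<lfloor>y * 2^m\<rfloor>"
      then have ?thesis using b0 by (simp add: dd_def) }
    moreover
    { assume "\<lfloor>x * 2^m\<rfloor> = \<lfloor>y * 2^m\<rfloor> + 1"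
      then have ?thesis by (rule dd_adj[OF x y]) (rule inc, auto) }
    moreover
    { assume "\<lfloor>y * 2^m\<rfloor> = \<lfloor>x * 2^m\<rfloor> + 1"
      then have "\<bar>g (dd m y) - g (dd m x)\<bar> \<le> bnd m" by (rule dd_adj[OF y x]) (rule inc, auto)
      then have ?thesis by (simp add: abs_minus_commute) }
    ultimately show ?thesis using fl by blast
  qed
  show ?thesis using part2[OF x] part2[OF y] mid by (simp add: abs_le_iff)
qed



lemma const_sign:
  fixes f :: "real \<Rightarrow> real"
  assumes cont: "continuous_on {a..b} f" and d: "0 < \<delta>" and nz: "\<And>s. a \<le> s \<Longrightarrow> s \<le> b \<Longrightarrow> \<delta> \<le> \<bar>f s\<bar>"
  shows "(\<forall>s\<in>{a..b}. \<delta> \<le> f s) \<or> (\<forall>s\<in>{a..b}. f s \<le> - \<delta>)"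
proof (rule ccontr)
  assume "\<not> ?thesis"
  then obtain p q where p: "p \<in> {a..b}" "\<not> \<delta> \<le> f p" and q: "q \<in> {a..b}" "\<not> f q \<le> - \<delta>" by blast
  have fp: "f p \<le> -\<delta>" using nz[of p] p by auto
  have fq: "\<delta> \<le> f q" using nz[of q] q by auto
  have "\<exists>x. a \<le> x \<and> x \<le> b \<and> f x = 0"
  proof (cases "p \<le> q")
    case True
    have "continuous_on {p..q} f" by (intro continuous_on_subset[OF cont]) (use p q in auto)
    then obtain x where "p \<le> x" "x \<le> q" "f x = 0" using IVT'[of f p 0 q] fp fq d True by auto
    then show ?thesis using p q by (intro exI[of _ x]) auto
  next
    case False
    have "continuous_on {q..p} f" using cont p q False by (intro continuous_on_subset[OF cont]) auto
    then obtain x where "q \<le> x" "x \<le> p" "f x = 0" using IVT2'[of f p 0 q] fp fq d False by auto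
    then show ?thesis using p q by (intro exI[of _ x]) auto
  qed
  then show False using nz d by force
qed

lemma det_lower:
  fixes f :: "real \<Rightarrow> real"
  assumes cont: "continuous_on {0..t} f" and a: "0 \<le> a" "a + L \<le> t" "0 < L" and d: "0 < \<delta>"
    and nz: "\<And>s. a \<le> s \<Longrightarrow> s \<le> a + L \<Longrightarrow> \<delta> \<le> \<bar>f s\<bar>"
  shows "\<delta>\<^sup>2 * L^3 / 64 \<le> integral {0..t} (\<lambda>r. (integral {r..t} f - c)\<^sup>2)"
proof -
  define F where "F = (\<lambda>r. integral {r..t} f)"
  have fi: "f integrable_on {0..t}" by (rule integrable_continuous_interval[OF cont])
  have Fc: "continuous_on {0..t} F" unfolding F_def by (rule indefinite_integral_continuous_1'[OF fi])
  have hc: "continuous_on {0..t} (\<lambda>r. (F r - c)\<^sup>2)" by (intro continuous_intros Fc)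
  have hi: "(\<lambda>r. (F r - c)\<^sup>2) integrable_on {p..q}" if "0 \<le> p" "q \<le> t" for p q
    by (rule integrable_continuous_interval, rule continuous_on_subset[OF hc]) (use that in auto)
  have fsub: "f integrable_on {p..q}" if "0 \<le> p" "q \<le> t" for p q
    by (rule integrable_continuous_interval, rule continuous_on_subset[OF cont]) (use that in auto)
  have cs: "continuous_on {a..a+L} f" by (rule continuous_on_subset[OF cont]) (use a in auto)
  have sign: "(\<forall>s\<in>{a..a+L}. \<delta> \<le> f s) \<or> (\<forall>s\<in>{a..a+L}. f s \<le> - \<delta>)"
    by (rule const_sign[OF cs d nz]) auto
  have diff: "\<delta> * (r2 - r1) \<le> \<bar>F r1 - F r2\<bar>" if r: "a \<le> r1" "r1 \<le> r2" "r2 \<le> a + L" for r1 r2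
  proof -
    have "F r1 - F r2 = integral {r1..r2} f"
      unfolding F_def using integral_minus_sets'[of r1 t r2 f] r a fsub[of r1 t] by auto
    moreover have ii: "f integrable_on {r1..r2}" using fsub[of r1 r2] r a by auto
    moreover have ci: "integral {r1..r2} (\<lambda>_. \<delta>) = \<delta> * (r2 - r1)" using r by simp
    moreover have ci2: "integral {r1..r2} (\<lambda>_. -\<delta>) = - \<delta> * (r2 - r1)" using r by simp
    moreover
    { assume pos: "\<forall>s\<in>{a..a+L}. \<delta> \<le> f s"
      have "integral {r1..r2} (\<lambda>_. \<delta>) \<le> integral {r1..r2} f"
        by (rule integral_le) (use ii pos r in auto)
      then have "\<delta> * (r2 - r1) \<le> integral {r1..r2} f" using r by (simp add: mult.commute) }
    moreover
    { assume neg: "\<forall>s\<in>{a..a+L}. f s \<le> - \<delta>"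
      have "integral {r1..r2} f \<le> integral {r1..r2} (\<lambda>_. -\<delta>)"
        by (rule integral_le) (use ii neg r in auto)
      then have "integral {r1..r2} f \<le> - \<delta> * (r2 - r1)" using r by (simp add: mult.commute) }
    ultimately show ?thesis using sign by fastforce
  qed
  have quarter: "(\<forall>r\<in>{a..a+L/4}. \<delta> * L / 4 \<le> \<bar>F r - c\<bar>) \<or> (\<forall>r\<in>{a+3*L/4..a+L}. \<delta> * L / 4 \<le> \<bar>F r - c\<bar>)"
  proof (rule ccontr)
    assume "\<not> ?thesis"
    then obtain r1 r2 where r1: "r1 \<in> {a..a+L/4}" "\<bar>F r1 - c\<bar> < \<delta> * L / 4"
      and r2: "r2 \<in> {a+3*L/4..a+L}" "\<bar>F r2 - c\<bar> < \<delta> * L / 4" by force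
    have "\<delta> * (r2 - r1) \<le> \<bar>F r1 - F r2\<bar>" by (rule diff) (use r1 r2 a in auto)
    moreover have "\<delta> * (L/2) \<le> \<delta> * (r2 - r1)" using r1 r2 d by (intro mult_left_mono) auto
    ultimately show False using r1 r2 by (simp add: abs_le_iff abs_less_iff)
  qed
  obtain p where p: "0 \<le> p" "p + L/4 \<le> t" "\<forall>r\<in>{p..p+L/4}. \<delta> * L / 4 \<le> \<bar>F r - c\<bar>"
  proof -
    { assume "\<forall>r\<in>{a..a+L/4}. \<delta> * L / 4 \<le> \<bar>F r - c\<bar>"
      then have ?thesis using that[of a] a by auto }
    moreover
    { assume h: "\<forall>r\<in>{a+3*L/4..a+L}. \<delta> * L / 4 \<le> \<bar>F r - c\<bar>"
      have "a+3*L/4 + L/4 = a + L" by simp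
      then have ?thesis using that[of "a+3*L/4"] a h by auto }
    ultimately show ?thesis using quarter by blast
  qed
  have lb: "(\<delta> * L / 4)\<^sup>2 \<le> (F r - c)\<^sup>2" if "r \<in> {p..p+L/4}" for r
  proof -
    have "(\<delta> * L / 4)\<^sup>2 \<le> \<bar>F r - c\<bar>\<^sup>2" using p(3) that d a by (intro power_mono) auto
    then show ?thesis by simp
  qed
  have "integral {p..p+L/4} (\<lambda>_. (\<delta> * L / 4)\<^sup>2) \<le> integral {p..p+L/4} (\<lambda>r. (F r - c)\<^sup>2)"
    by (rule integral_le) (use lb hi p in auto)
  also have "\<dots> \<le> integral {0..t} (\<lambda>r. (F r - c)\<^sup>2)"
    by (rule integral_subset_le) (use hi p a in auto)
  finally have "L/4 * (\<delta> * L / 4)\<^sup>2 \<le> integral {0..t} (\<lambda>r. (F r - c)\<^sup>2)" using a by simp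
  moreover have "L/4 * (\<delta> * L / 4)\<^sup>2 = \<delta>\<^sup>2 * L^3 / 64" by (simp add: power2_eq_square power3_eq_cube)
  ultimately show ?thesis by (simp add: F_def)
qed



lemma deriv_periodic:
  fixes g :: "real \<Rightarrow> real"
  assumes dg: "\<And>x. g differentiable (at x)" and per: "\<And>x. g (x + c) = g x"
  shows "deriv g (x + c) = deriv g x"
proof -
  have "(g has_field_derivative deriv g (x + c)) (at (x + c))"
    using dg by (simp add: DERIV_deriv_iff_real_differentiable)
  then have "((\<lambda>x. g (x + c)) has_field_derivative deriv g (x + c)) (at x)"
    by (simp add: DERIV_shift)
  then have "(g has_field_derivative deriv g (x + c)) (at x)" using per by simp
  then show ?thesis by (rule DERIV_imp_deriv[symmetric])
qed

lemma periodic_int: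
  fixes h :: "real \<Rightarrow> 'b"
  assumes per: "\<And>x. h (x + c) = h x"
  shows "h (x + c * of_int k) = h x"
proof -
  have nat: "h (y + c * real n) = h y" for y n
  proof (induction n)
    case 0 then show ?case by simp
  next
    case (Suc n)
    have eq: "y + c * real (Suc n) = (y + c * real n) + c" by (simp add: algebra_simps)
    have "h (y + c * real (Suc n)) = h ((y + c * real n) + c)" using arg_cong[OF eq, of h] .
    also have "\<dots> = h (y + c * real n)" by (rule per)
    also have "\<dots> = h y" by (rule Suc.IH)
    finally show ?case .
  qed
  show ?thesis
  proof (cases "0 \<le> k")
    case True
    then show ?thesis using nat[of x "nat k"] by simp
  next
    case False
    have "h (x + c * of_int k + c * real (nat (-k))) = h (x + c * of_int k)" by (rule nat)
    then show ?thesis using False by simp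
  qed
qed

lemma periodic_reduce:
  fixes x :: real
  defines "x' \<equiv> x - 2*pi * of_int \<lfloor>x / (2*pi)\<rfloor>"
  shows "0 \<le> x'" "x' \<le> 2*pi"
proof -
  have c: "0 < 2*pi" by simp
  have h1: "of_int \<lfloor>x / (2*pi)\<rfloor> \<le> x / (2*pi)" and h2: "x / (2*pi) < of_int \<lfloor>x / (2*pi)\<rfloor> + 1" by auto
  have "of_int \<lfloor>x / (2*pi)\<rfloor> * (2*pi) \<le> x" using pos_le_divide_eq[OF c] h1 by blast
  moreover have "x < (of_int \<lfloor>x / (2*pi)\<rfloor> + 1) * (2*pi)" using pos_divide_less_eq[OF c] h2 by blast
  ultimately have "2*pi * of_int \<lfloor>x / (2*pi)\<rfloor> \<le> x" "x < 2*pi * (of_int \<lfloor>x / (2*pi)\<rfloor> + 1)"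
    by (simp_all add: mult.commute)
  then show "0 \<le> x'" "x' \<le> 2*pi" unfolding x'_def by (auto simp: algebra_simps)
qed

lemma periodic_bounded:
  fixes h :: "real \<Rightarrow> real"
  assumes per: "\<And>x. h (x + 2*pi) = h x" and cont: "continuous_on UNIV h"
  shows "\<exists>K. \<forall>x. \<bar>h x\<bar> \<le> K"
proof -
  have "compact (h ` {0..2*pi})" by (intro compact_continuous_image continuous_on_subset[OF cont]) auto
  then obtain K where K: "\<forall>y\<in>h ` {0..2*pi}. norm y \<le> K" using compact_imp_bounded bounded_iff by metis
  have "\<bar>h x\<bar> \<le> K" for x
  proof -
    define x' where "x' = x - 2*pi * of_int \<lfloor>x / (2*pi)\<rfloor>"
    have "0 \<le> x'" "x' \<le> 2*pi" unfolding x'_def by (rule periodic_reduce)+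
    moreover have "h x' = h x" unfolding x'_def
      using periodic_int[of h "2*pi" "x - 2*pi * of_int \<lfloor>x / (2*pi)\<rfloor>" "\<lfloor>x / (2*pi)\<rfloor>"] per by simp
    ultimately have "x' \<in> {0..2*pi}" "h x' = h x" by auto
    then show ?thesis using K by (metis image_eqI real_norm_def)
  qed
  then show ?thesis by blast
qed

lemma infdist_shift:
  fixes A :: "real set"
  assumes sh: "\<And>a. a \<in> A \<Longrightarrow> a + c \<in> A"
  shows "infdist (x + c) A \<le> infdist x A"
proof (cases "A = {}")
  case True then show ?thesis by (simp add: infdist_def)
next
  case False
  have "infdist (x + c) A \<le> dist x a" if "a \<in> A" for a
  proof -
    have "infdist (x + c) A \<le> dist (x + c) (a + c)" by (rule infdist_le[OF sh[OF that]])
    also have "\<dots> = dist x a" by (simp add: dist_real_def)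
    finally show ?thesis .
  qed
  then show ?thesis unfolding infdist_notempty[OF False] by (intro cINF_greatest False) auto
qed

lemma crit_bound:
  fixes u' :: "real \<Rightarrow> real"
  assumes per: "\<And>x. u' (x + 2*pi) = u' x" and cont: "continuous_on UNIV u'" and e: "0 < e"
  shows "\<exists>\<delta>>0. \<forall>x. e \<le> infdist x {x. u' x = 0} \<longrightarrow> \<delta> \<le> \<bar>u' x\<bar>"
proof -
  define A where "A = {x. u' x = 0}"
  have Ash: "a + 2*pi * of_int k \<in> A" if "a \<in> A" for a k
    using that periodic_int[of u' "2*pi" a k] per by (simp add: A_def)
  have inv: "infdist (x + 2*pi * of_int k) A = infdist x A" for x k
  proof (rule antisym)
    show "infdist (x + 2*pi * of_int k) A \<le> infdist x A" by (rule infdist_shift) (rule Ash)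
    have "infdist (x + 2*pi * of_int k + 2*pi * of_int (-k)) A \<le> infdist (x + 2*pi * of_int k) A"
      by (rule infdist_shift) (rule Ash)
    then show "infdist x A \<le> infdist (x + 2*pi * of_int k) A" by simp
  qed
  define P where "P = {0..2*pi} \<inter> {x. e \<le> infdist x A}"
  have cP: "compact P" unfolding P_def
    by (intro compact_Int_closed closed_Collect_le continuous_intros) auto
  show ?thesis
  proof (cases "P = {}")
    case True
    have "\<not> e \<le> infdist x A" for x
    proof
      assume h: "e \<le> infdist x A"
      define x' where "x' = x - 2*pi * of_int \<lfloor>x / (2*pi)\<rfloor>"
      have "0 \<le> x'" "x' \<le> 2*pi" unfolding x'_def by (rule periodic_reduce)+
      moreover have "infdist x' A = infdist x A" unfolding x'_def
        using inv[of x "- \<lfloor>x / (2*pi)\<rfloor>"] by simp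
      ultimately have "x' \<in> P" using h by (simp add: P_def)
      then show False using True by simp
    qed
    then show ?thesis unfolding A_def[symmetric] by (intro exI[of _ 1]) auto
  next
    case False
    obtain xs where xs: "xs \<in> P" "\<forall>y\<in>P. \<bar>u' xs\<bar> \<le> \<bar>u' y\<bar>"
      using continuous_attains_inf[OF cP False, of "\<lambda>x. \<bar>u' x\<bar>"] continuous_on_subset[OF cont]
      by (metis continuous_on_rabs subset_UNIV)
    have "xs \<notin> A"
    proof
      assume "xs \<in> A" then have "infdist xs A = 0" by simp
      then show False using xs e by (simp add: P_def)
    qed
    then have d0: "0 < \<bar>u' xs\<bar>" by (simp add: A_def)
    have "\<bar>u' xs\<bar> \<le> \<bar>u' x\<bar>" if h: "e \<le> infdist x A" for x
    proof -
      define x' where "x' = x - 2*pi * of_int \<lfloor>x / (2*pi)\<rfloor>"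
      have "0 \<le> x'" "x' \<le> 2*pi" unfolding x'_def by (rule periodic_reduce)+
      moreover have "infdist x' A = infdist x A" unfolding x'_def
        using inv[of x "- \<lfloor>x / (2*pi)\<rfloor>"] by simp
      ultimately have "x' \<in> P" using h by (simp add: P_def)
      moreover have "u' x' = u' x" unfolding x'_def
        using periodic_int[of u' "2*pi" x "- \<lfloor>x / (2*pi)\<rfloor>"] per by simp
      ultimately show ?thesis using xs by auto
    qed
    then show ?thesis using d0 unfolding A_def[symmetric] by blast
  qed
qed



lemma gauss_tail:
  assumes BM: "std_BM M B" and st: "0 \<le> s" "s < t" and b: "0 < b"
  shows "measure M {\<omega>\<in>space M. b \<le> \<bar>B t \<omega> - B s \<omega>\<bar>}
     \<le> fact (2*q) / (2^q * fact q) * (t - s)^q / b^(2*q)"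
proof -
  define Z where "Z = (\<lambda>\<omega>. B t \<omega> - B s \<omega>)"
  define \<sigma> where "\<sigma> = sqrt (t - s)"
  have sp: "\<sigma> > 0" using st by (simp add: \<sigma>_def)
  have ps: "prob_space M" using BM by (simp add: std_BM_def)
  then interpret prob_space M .
  have D: "distributed M lborel Z (\<lambda>x. ennreal (normal_density 0 \<sigma> x))"
    using BM st unfolding std_BM_def Z_def \<sigma>_def by auto
  have mZ[measurable]: "Z \<in> borel_measurable M"
    using distributed_measurable[OF D] by simp
  have hb: "has_bochner_integral lborel (\<lambda>x. normal_density 0 \<sigma> x * (x - 0) ^ (2 * q)) (fact (2 * q) / ((2 / \<sigma>\<^sup>2)^q * fact q))"
    by (rule normal_moment_even[OF sp])
  have il: "integrable lborel (\<lambda>x. normal_density 0 \<sigma> x * x ^ (2 * q))"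
    using hb by (simp add: has_bochner_integral_iff)
  have iM: "integrable M (\<lambda>\<omega>. Z \<omega> ^ (2*q))"
    using distributed_integrable[OF D, of "\<lambda>x. x ^ (2*q)"] il by simp
  have eq: "(\<integral>\<omega>. Z \<omega> ^ (2*q) \<partial>M) = fact (2 * q) / ((2 / \<sigma>\<^sup>2)^q * fact q)"
    using distributed_integral[OF D, of "\<lambda>x. x ^ (2*q)"] has_bochner_integral_integral_eq[OF hb] by simp
  have s2: "\<sigma>\<^sup>2 = t - s" using st by (simp add: \<sigma>_def)
  have val: "fact (2 * q) / ((2 / \<sigma>\<^sup>2)^q * fact q) = fact (2*q) / (2^q * fact q) * (t - s)^q"
    using st by (simp add: s2 power_divide field_simps)
  have sub: "{\<omega>\<in>space M. b \<le> \<bar>B t \<omega> - B s \<omega>\<bar>} \<subseteq> {\<omega>\<in>space M. b^(2*q) \<le> Z \<omega> ^ (2*q)}"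
  proof
    fix \<omega> assume "\<omega> \<in> {\<omega>\<in>space M. b \<le> \<bar>B t \<omega> - B s \<omega>\<bar>}"
    then have "\<omega> \<in> space M" "b \<le> \<bar>Z \<omega>\<bar>" by (auto simp: Z_def)
    then have "b^(2*q) \<le> \<bar>Z \<omega>\<bar>^(2*q)" using b by (intro power_mono) auto
    also have "\<bar>Z \<omega>\<bar>^(2*q) = Z \<omega> ^ (2*q)" by (simp add: power_even_abs)
    finally show "\<omega> \<in> {\<omega>\<in>space M. b^(2*q) \<le> Z \<omega> ^ (2*q)}" using \<open>\<omega> \<in> space M\<close> by simp
  qed
  have "measure M {\<omega>\<in>space M. b \<le> \<bar>B t \<omega> - B s \<omega>\<bar>} \<le> measure M {\<omega>\<in>space M. b^(2*q) \<le> Z \<omega> ^ (2*q)}"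
    by (rule finite_measure_mono[OF sub]) measurable
  also have "\<dots> \<le> (\<integral>\<omega>. Z \<omega> ^ (2*q) \<partial>M) / b^(2*q)"
    by (rule integral_Markov_inequality_measure[OF iM, where A="space M"]) (use b in auto)
  finally show ?thesis using eq val by simp
qed

lemma ident:
  fixes t \<beta> \<theta> :: real and m i r :: nat
  assumes "0 < t" "0 < \<beta>" "0 < \<theta>"
  shows "2^(m+i) * (t / 2^(m+i))^(Suc (3*r)) / (\<beta> * \<theta>^i)^(2 * Suc (3*r))
    = (t / \<beta>^2)^(Suc (3*r)) * ((1/2)^(3*m))^r * (2 / (2*\<theta>^2)^(Suc (3*r)))^i"
proof -
  define q where "q = Suc (3*r)"
  have L: "2^(m+i) * (t / 2^(m+i))^q / (\<beta> * \<theta>^i)^(2 * q) = t^q / (2^(m+i))^(3*r) / (\<beta>^(2*q) * (\<theta>^i)^(2*q))"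
    by (simp add: q_def power_divide power_mult_distrib)
  have R: "(t / \<beta>^2)^q * ((1/2)^(3*m))^r * (2 / (2*\<theta>^2)^q)^i = t^q / \<beta>^(2*q) / 2^(3*m*r) * (2^i / (2^(q*i) * \<theta>^(2*q*i)))"
    by (simp add: power_divide power_mult_distrib power_mult[symmetric] mult.commute mult.left_commute)
  have e: "(2::real)^(q*i) = 2^i * 2^(3*r*i)" by (simp add: q_def power_add[symmetric])
  have e2: "(2::real)^((m+i)*(3*r)) = 2^(3*m*r) * 2^(3*r*i)" by (simp add: power_add[symmetric] algebra_simps)
  have e3: "(\<theta>^i)^(2*q) = \<theta>^(2*q*i)" by (simp add: power_mult[symmetric] mult.commute)
  show ?thesis unfolding q_def[symmetric] L R using assms
    by (simp add: e e2 e3 field_simps power_mult[symmetric]) (simp add: q_def power_add[symmetric] algebra_simps)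
qed

definition Eset :: "'a measure \<Rightarrow> (real \<Rightarrow> 'a \<Rightarrow> real) \<Rightarrow> real \<Rightarrow> nat \<Rightarrow> real \<Rightarrow> 'a set" where
  "Eset M B t m \<beta> = (\<Union>i. \<Union>j\<in>{..<2^(m+i)}. {\<omega>\<in>space M. \<beta>*(7/8)^i \<le> \<bar>B (t*(real (Suc j)/2^(m+i))) \<omega> - B (t*(real j/2^(m+i))) \<omega>\<bar>})"

lemma Eset_prob:
  assumes BM: "std_BM M B" and t: "0 < t" and b: "0 < \<beta>" and r: "1 \<le> r"
  shows "Eset M B t m \<beta> \<in> sets M"
    "measure M (Eset M B t m \<beta>) \<le> 2 * (fact (2*Suc (3*r)) / (2^Suc (3*r) * fact (Suc (3*r))))
        * (t / \<beta>^2)^(Suc (3*r)) * ((1/2)^(3*m))^r"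
proof -
  define q where "q = Suc (3*r)"
  define cq :: real where "cq = fact (2*q) / (2^q * fact q)"
  define \<rho> :: real where "\<rho> = 2 / (2*(7/8)^2)^q"
  define P where "P = (\<lambda>i j. {\<omega>\<in>space M. \<beta>*(7/8)^i \<le> \<bar>B (t*(real (Suc j)/2^(m+i))) \<omega> - B (t*(real j/2^(m+i))) \<omega>\<bar>})"
  define A where "A = (\<lambda>i. \<Union>j\<in>{..<(2::nat)^(m+i)}. P i j)"
  have ps: "prob_space M" using BM by (simp add: std_BM_def)
  then interpret prob_space M .
  have mB: "B s \<in> borel_measurable M" if "0 \<le> s" for s using BM that by (simp add: std_BM_def)
  have Pm: "P i j \<in> sets M" for i j
  proof -
    have [measurable]: "B (t*(real (Suc j)/2^(m+i))) \<in> borel_measurable M" "B (t*(real j/2^(m+i))) \<in> borel_measurable M"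
      using mB t by auto
    show ?thesis unfolding P_def by measurable
  qed
  have Am: "A i \<in> sets M" for i unfolding A_def using Pm by auto
  have EA: "Eset M B t m \<beta> = (\<Union>i. A i)" unfolding Eset_def A_def P_def by simp
  show "Eset M B t m \<beta> \<in> sets M" unfolding EA using Am by auto
  define T where "T = (\<lambda>i. cq * (t / \<beta>^2)^q * ((1/2)^(3*m))^r * \<rho>^i)"
  have PT: "measure M (P i j) \<le> cq * (t / 2^(m+i))^q / (\<beta> * (7/8)^i)^(2*q)" for i j
  proof -
    have "measure M (P i j) \<le> fact (2*q) / (2^q * fact q) * (t*(real (Suc j)/2^(m+i)) - t*(real j/2^(m+i)))^q / (\<beta>*(7/8)^i)^(2*q)"
      unfolding P_def by (rule gauss_tail[OF BM]) (use t b in \<open>auto simp: field_simps\<close>)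
    moreover have "t*(real (Suc j)/2^(m+i)) - t*(real j/2^(m+i)) = t / 2^(m+i)" by (simp add: field_simps)
    ultimately show ?thesis by (simp add: cq_def)
  qed
  have AT: "measure M (A i) \<le> T i" for i
  proof -
    have "measure M (A i) \<le> (\<Sum>j\<in>{..<(2::nat)^(m+i)}. measure M (P i j))"
      unfolding A_def by (rule finite_measure_subadditive_finite) (use Pm in auto)
    also have "\<dots> \<le> (\<Sum>j\<in>{..<(2::nat)^(m+i)}. cq * (t / 2^(m+i))^q / (\<beta> * (7/8)^i)^(2*q))"
      by (rule sum_mono) (rule PT)
    also have "\<dots> = 2^(m+i) * (cq * (t / 2^(m+i))^q / (\<beta> * (7/8)^i)^(2*q))" by simp
    also have "\<dots> = cq * (2^(m+i) * (t / 2^(m+i))^q / (\<beta> * (7/8)^i)^(2*q))" by simp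
    also have "\<dots> = T i" unfolding T_def q_def \<rho>_def using ident[OF t b, of "7/8" m i r] by simp
    finally show ?thesis .
  qed
  have rho0: "0 \<le> \<rho>" by (simp add: \<rho>_def)
  have rho: "\<rho> \<le> 1/2"
  proof -
    have q4: "4 \<le> q" using r by (simp add: q_def)
    have "(49/32::real)^4 \<le> (49/32)^q" by (rule power_increasing[OF q4]) auto
    moreover have "(4::real) \<le> (49/32)^4" by (simp add: power_divide)
    ultimately have h4: "4 \<le> (49/32::real)^q" by linarith
    have c: "(2*(7/8)^2::real) = 49/32" by (simp add: power2_eq_square)
    define X where "X = (2*(7/8)^2::real)^q"
    have "4 \<le> X" unfolding X_def c using h4 .
    moreover have "\<rho> = 2 / X" unfolding X_def \<rho>_def ..
    ultimately show ?thesis by (simp add: divide_le_eq)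
  qed
  have cq0: "0 \<le> cq" by (simp add: cq_def)
  have sT: "summable T" unfolding T_def
    by (intro summable_mult summable_geometric) (use rho rho0 in simp)
  have sA: "summable (\<lambda>i. measure M (A i))"
    by (rule summable_comparison_test'[OF sT, of 0]) (use AT in simp)
  have "measure M (\<Union>i. A i) \<le> (\<Sum>i. measure M (A i))"
    by (rule finite_measure_subadditive_countably) (use Am sA in auto)
  also have "\<dots> \<le> (\<Sum>i. T i)" by (rule suminf_le[OF AT sA sT])
  also have "(\<Sum>i. T i) = cq * (t / \<beta>^2)^q * ((1/2)^(3*m))^r * (1 / (1 - \<rho>))"
    unfolding T_def using rho rho0 by (simp add: suminf_mult suminf_geometric)
  also have "\<dots> \<le> cq * (t / \<beta>^2)^q * ((1/2)^(3*m))^r * 2"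
    by (rule mult_left_mono) (use rho rho0 cq0 t b in \<open>auto simp: field_simps\<close>)
  finally have fin: "measure M (\<Union>i. A i) \<le> cq * (t / \<beta>^2)^q * ((1/2)^(3*m))^r * 2" .
  have eq: "cq * (t / \<beta>^2)^q * ((1/2)^(3*m))^r * 2 = 2 * (fact (2*Suc (3*r)) / (2^Suc (3*r) * fact (Suc (3*r))))
        * (t / \<beta>^2)^(Suc (3*r)) * ((1/2)^(3*m))^r" unfolding cq_def q_def by (simp only: ac_simps)
  show "measure M (Eset M B t m \<beta>) \<le> 2 * (fact (2*Suc (3*r)) / (2^Suc (3*r) * fact (Suc (3*r))))
        * (t / \<beta>^2)^(Suc (3*r)) * ((1/2)^(3*m))^r" unfolding EA using fin eq by simp
qed



lemma geo_partial: "(\<Sum>k\<in>{m<..n}. (7/8::real)^(k-m)) \<le> 7"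
proof (cases "m \<le> n")
  case True
  have "(\<Sum>k\<in>{m<..n}. (7/8::real)^(k-m)) \<le> 7 * (1 - (7/8)^(n-m))" using True
  proof (induction n rule: dec_induct)
    case base then show ?case by simp
  next
    case (step n)
    have "{m<..Suc n} = insert (Suc n) {m<..n}" using step by auto
    then have "(\<Sum>k\<in>{m<..Suc n}. (7/8::real)^(k-m)) = (7/8)^(Suc n - m) + (\<Sum>k\<in>{m<..n}. (7/8::real)^(k-m))" by simp
    also have "(7/8::real)^(Suc n - m) = 7/8 * (7/8)^(n-m)" using step by (simp add: Suc_diff_le)
    finally show ?case using step.IH using step by (simp add: Suc_diff_le)
  qed
  also have "\<dots> \<le> 7" by simp
  finally show ?thesis .
next
  case False
  then have "{m<..n} = {}" by auto
  then show ?thesis by simp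
qed

lemma Eset_osc:
  assumes cont: "continuous_on {0..} (\<lambda>s. B s \<omega>)" and t: "0 < t" and b: "0 < \<beta>"
    and \<omega>: "\<omega> \<in> space M" and nE: "\<omega> \<notin> Eset M B t m \<beta>"
    and s: "0 \<le> s" "s \<le> t" and s': "0 \<le> s'" "s' \<le> t" and ss: "\<bar>s - s'\<bar> \<le> t / 2^m"
  shows "\<bar>B s \<omega> - B s' \<omega>\<bar> \<le> 15 * \<beta>"
proof -
  define g where "g = (\<lambda>x. B (t * x) \<omega>)"
  have gc: "continuous_on {0..1} g" unfolding g_def
    by (rule continuous_on_compose2[OF cont, of _ "\<lambda>x. t * x"]) (use t in \<open>auto intro!: continuous_intros\<close>)
  have inc: "\<bar>g (real (Suc j) / 2^k) - g (real j / 2^k)\<bar> \<le> \<beta> * (7/8)^(k-m)" if "m \<le> k" "j < 2^k" for k j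
  proof -
    have k: "k = m + (k - m)" using that by simp
    have nn: "\<omega> \<notin> {\<omega>\<in>space M. \<beta>*(7/8)^(k-m) \<le> \<bar>B (t*(real (Suc j)/2^(m+(k-m)))) \<omega> - B (t*(real j/2^(m+(k-m)))) \<omega>\<bar>}"
    proof -
      have jj: "j \<in> {..<2^(m+(k-m))}" using that by simp
      show ?thesis using nE jj unfolding Eset_def by blast
    qed
    then show ?thesis using \<omega> k unfolding g_def by simp
  qed
  have x: "0 \<le> s/t" "s/t \<le> 1" "0 \<le> s'/t" "s'/t \<le> 1" using s s' t by auto
  have xy: "\<bar>s/t - s'/t\<bar> \<le> 1/2^m"
  proof -
    have "\<bar>s/t - s'/t\<bar> = \<bar>s - s'\<bar> / t" using t by (simp add: diff_divide_distrib[symmetric] abs_divide)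
    also have "\<dots> \<le> (t / 2^m) / t" using ss t by (intro divide_right_mono) auto
    finally show ?thesis using t by simp
  qed
  have S: "(\<Sum>k\<in>{m<..n}. \<beta> * (7/8)^(k-m)) \<le> 7 * \<beta>" for n
    using geo_partial[of m n] b by (simp add: sum_distrib_left[symmetric] mult.commute)
  have "\<bar>g (s/t) - g (s'/t)\<bar> \<le> \<beta> * (7/8)^(m-m) + 2 * (7 * \<beta>)"
    by (rule chain[OF gc inc S x xy]) auto
  then show ?thesis unfolding g_def using t by simp
qed

lemma exists_m:
  fixes \<mu> :: real assumes "0 < \<mu>" "\<mu> < 1"
  shows "\<exists>m. \<mu> < (1/8)^m \<and> (1/8)^m \<le> 8 * \<mu>"
proof -
  have ex: "\<exists>n. (1/8::real)^n \<le> \<mu>"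
    using real_arch_pow_inv[of \<mu> "1/8"] assms by (auto intro: less_imp_le)
  define n0 where "n0 = (LEAST n. (1/8::real)^n \<le> \<mu>)"
  have n0: "(1/8::real)^n0 \<le> \<mu>" unfolding n0_def by (rule LeastI_ex[OF ex])
  have "n0 \<noteq> 0" proof assume "n0 = 0" then show False using n0 assms by simp qed
  then obtain m where m: "n0 = Suc m" by (cases n0) auto
  have "\<not> (1/8::real)^m \<le> \<mu>" using not_less_Least[of m "\<lambda>n. (1/8::real)^n \<le> \<mu>"] m unfolding n0_def by simp
  moreover have "(1/8::real)^m \<le> 8 * \<mu>" using n0 m by simp
  ultimately show ?thesis by (intro exI[of _ m]) simp
qed



lemma part1:
  fixes u :: "real \<Rightarrow> real" and M :: "'a measure" and B :: "real \<Rightarrow> 'a \<Rightarrow> real"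
  assumes BM: "std_BM M B" and cont: "continuous_on UNIV (deriv u)"
    and per: "\<And>x. deriv u (x + 2*pi) = deriv u x"
    and eta: "0 < \<eta>" and vt: "0 < vt" and om: "0 < \<omega>'"
  shows "implies_eps M
            (\<lambda>(\<nu>, t, y) \<epsilon>. {\<omega> \<in> space M. detM u B \<nu> t y \<omega> \<le> \<epsilon> * vt * t powr (\<omega>' + 3) * \<nu> powr \<omega>'})
            (\<lambda>(\<nu>, t, y) \<epsilon>. {\<omega> \<in> space M. \<forall>s\<in>{0..t}. infdist (y + sqrt \<nu> * B s \<omega>) {x. deriv u x = 0} \<le> \<eta>})
            {(\<nu>, t, y). 0 < \<nu> \<and> \<nu> \<le> 1 \<and> 0 < t \<and> t \<le> 1 / \<nu>}"
proof -
  define A where "A = {x. deriv u x = 0}"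
  obtain \<delta> where d: "0 < \<delta>" and dA: "\<And>x. \<eta>/2 \<le> infdist x A \<Longrightarrow> \<delta> \<le> \<bar>deriv u x\<bar>"
    using crit_bound[OF per cont, of "\<eta>/2"] eta unfolding A_def by auto
  have ps: "prob_space M" using BM by (simp add: std_BM_def)
  then interpret prob_space M .
  have pcont: "continuous_on {0..} (\<lambda>s. B s \<omega>)" if "\<omega> \<in> space M" for \<omega>
    using BM that by (simp add: std_BM_def)
  show ?thesis unfolding implies_eps_def almost_false_def
  proof (intro allI impI)
    fix p :: real assume p: "0 < p"
    define r where "r = nat \<lceil>p\<rceil> + 1"
    have r1: "1 \<le> r" by (simp add: r_def)
    have rp: "p \<le> real r" unfolding r_def by linarith
    define q where "q = Suc (3*r)"
    define cq :: real where "cq = fact (2*q) / (2^q * fact q)"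
    define \<Lambda> where "\<Lambda> = 64 * vt / \<delta>^2"
    have L0: "0 < \<Lambda>" using vt d by (simp add: \<Lambda>_def)
    define K0 where "K0 = 2 * cq * (900 / \<eta>^2)^q * (8 * \<Lambda>)^r"
    have K00: "0 \<le> K0" using L0 by (simp add: K0_def cq_def)
    define \<epsilon>0 where "\<epsilon>0 = min 1 (1 / (2 * \<Lambda>))"
    show "\<exists>C \<epsilon>0. C > 0 \<and> \<epsilon>0 > 0 \<and> (\<forall>\<zeta>\<in>{(\<nu>, t, y). 0 < \<nu> \<and> \<nu> \<le> 1 \<and> 0 < t \<and> t \<le> 1 / \<nu>}. \<forall>\<epsilon>. 0 < \<epsilon> \<and> \<epsilon> \<le> \<epsilon>0 \<longrightarrow>
           (\<exists>E\<in>sets M. (case \<zeta> of (\<nu>, t, y) \<Rightarrow> \<lambda>\<epsilon>. {\<omega> \<in> space M. detM u B \<nu> t y \<omega> \<le> \<epsilon> * vt * t powr (\<omega>' + 3) * \<nu> powr \<omega>'}) \<epsilon> -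
                         (case \<zeta> of (\<nu>, t, y) \<Rightarrow> \<lambda>\<epsilon>. {\<omega> \<in> space M. \<forall>s\<in>{0..t}. infdist (y + sqrt \<nu> * B s \<omega>) {x. deriv u x = 0} \<le> \<eta>}) \<epsilon>
                \<subseteq> E \<and> measure M E \<le> C * \<epsilon> powr p))"
    proof (rule exI[of _ "K0 + 1"], rule exI[of _ \<epsilon>0], intro conjI ballI allI impI)
      show "0 < K0 + 1" using K00 by simp
      show "0 < \<epsilon>0" using L0 by (simp add: \<epsilon>0_def)
      fix \<zeta> :: "real \<times> real \<times> real" and \<epsilon> :: real assume z: "\<zeta> \<in> {(\<nu>, t, y). 0 < \<nu> \<and> \<nu> \<le> 1 \<and> 0 < t \<and> t \<le> 1 / \<nu>}" and e: "0 < \<epsilon> \<and> \<epsilon> \<le> \<epsilon>0"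
      obtain \<nu> t y where zz: "\<zeta> = (\<nu>, t, y)" by (cases \<zeta>) auto
      have nu: "0 < \<nu>" "\<nu> \<le> 1" and t: "0 < t" "t \<le> 1 / \<nu>" using z zz by auto
      have tnu: "t * \<nu> \<le> 1" using t nu by (simp add: field_simps)
      have tnu0: "0 < t * \<nu>" using t nu by simp
      have e0: "0 < \<epsilon>" and e1: "\<epsilon> \<le> 1" and e2: "\<epsilon> \<le> 1 / (2 * \<Lambda>)" using e by (auto simp: \<epsilon>0_def)
      define \<mu> where "\<mu> = 64 * \<epsilon> * vt * (t * \<nu>) powr \<omega>' / \<delta>^2"
      have mu0: "0 < \<mu>" unfolding \<mu>_def using e0 vt d tnu0 by (intro divide_pos_pos mult_pos_pos) auto
      have pw: "(t * \<nu>) powr \<omega>' \<le> 1" using tnu tnu0 om by (simp add: powr_le1)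
      have muL: "\<mu> \<le> \<Lambda> * \<epsilon>"
      proof -
        have "\<mu> = \<Lambda> * \<epsilon> * (t * \<nu>) powr \<omega>'" by (simp add: \<mu>_def \<Lambda>_def)
        also have "\<dots> \<le> \<Lambda> * \<epsilon> * 1" using L0 e0 pw by (intro mult_left_mono) auto
        finally show ?thesis by simp
      qed
      have mu1: "\<mu> < 1"
      proof -
        have "\<Lambda> * \<epsilon> \<le> \<Lambda> * (1 / (2 * \<Lambda>))" using L0 e2 by (intro mult_left_mono) auto
        then show ?thesis using muL L0 by simp
      qed
      obtain m where m1: "\<mu> < (1/8)^m" and m2: "(1/8::real)^m \<le> 8 * \<mu>" using exists_m[OF mu0 mu1] by blast
      define \<beta> where "\<beta> = \<eta> / (30 * sqrt \<nu>)"
      have b0: "0 < \<beta>" using eta nu by (simp add: \<beta>_def)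
      define E where "E = Eset M B t m \<beta>"
      have Em: "E \<in> sets M" unfolding E_def by (rule Eset_prob(1)[OF BM t(1) b0 r1])
      have Emeas: "measure M E \<le> 2 * cq * (t / \<beta>^2)^q * ((1/2)^(3*m))^r"
        unfolding E_def cq_def q_def by (rule Eset_prob(2)[OF BM t(1) b0 r1])
      show "\<exists>E\<in>sets M. (case \<zeta> of (\<nu>, t, y) \<Rightarrow> \<lambda>\<epsilon>. {\<omega> \<in> space M. detM u B \<nu> t y \<omega> \<le> \<epsilon> * vt * t powr (\<omega>' + 3) * \<nu> powr \<omega>'}) \<epsilon> -
                         (case \<zeta> of (\<nu>, t, y) \<Rightarrow> \<lambda>\<epsilon>. {\<omega> \<in> space M. \<forall>s\<in>{0..t}. infdist (y + sqrt \<nu> * B s \<omega>) {x. deriv u x = 0} \<le> \<eta>}) \<epsilon>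
                \<subseteq> E \<and> measure M E \<le> (K0 + 1) * \<epsilon> powr p"
      proof (intro bexI[OF _ Em] conjI)
        show "measure M E \<le> (K0 + 1) * \<epsilon> powr p"
        proof -
          have "(30 * sqrt \<nu>)^2 = 900 * \<nu>" using nu by (simp add: power_mult_distrib)
          then have tb: "t / \<beta>^2 = 900 * (t*\<nu>) / \<eta>^2" using nu eta by (simp add: \<beta>_def power_divide field_simps)
          have tb0: "0 \<le> t / \<beta>^2" using t by simp
          have tb1: "t / \<beta>^2 \<le> 900 / \<eta>^2" unfolding tb using tnu eta by (simp add: divide_right_mono)
          have h8: "(1/2::real)^(3*m) = (1/8)^m"
          proof -
            have "(1/2::real)^3 = 1/8" by (simp add: power_divide)
            then show ?thesis by (simp only: power_mult)
          qed
          have p8: "((1/2::real)^(3*m)) \<le> 8*\<Lambda>*\<epsilon>" unfolding h8 using m2 muL by linarith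
          have cq0: "0 \<le> cq" by (simp add: cq_def)
          have "measure M E \<le> 2 * cq * (t / \<beta>^2)^q * ((1/2)^(3*m))^r" by (rule Emeas)
          also have "\<dots> \<le> 2 * cq * (900 / \<eta>^2)^q * (8*\<Lambda>*\<epsilon>)^r"
            by (intro mult_mono mult_left_mono power_mono tb1 p8 tb0) (use cq0 tb0 in auto)
          also have "\<dots> = K0 * \<epsilon>^r" by (simp add: K0_def power_mult_distrib)
          also have "\<dots> \<le> K0 * \<epsilon> powr p"
          proof (rule mult_left_mono[OF _ K00])
            have "\<epsilon>^r = \<epsilon> powr (real r)" using e0 by (simp add: powr_realpow)
            also have "\<dots> \<le> \<epsilon> powr p" by (rule powr_mono'[OF rp]) (use e0 e1 in auto)
            finally show "\<epsilon>^r \<le> \<epsilon> powr p" .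
          qed
          also have "\<dots> \<le> (K0 + 1) * \<epsilon> powr p" by (simp add: distrib_right)
          finally show ?thesis .
        qed
        show "(case \<zeta> of (\<nu>, t, y) \<Rightarrow> \<lambda>\<epsilon>. {\<omega> \<in> space M. detM u B \<nu> t y \<omega> \<le> \<epsilon> * vt * t powr (\<omega>' + 3) * \<nu> powr \<omega>'}) \<epsilon> -
                         (case \<zeta> of (\<nu>, t, y) \<Rightarrow> \<lambda>\<epsilon>. {\<omega> \<in> space M. \<forall>s\<in>{0..t}. infdist (y + sqrt \<nu> * B s \<omega>) {x. deriv u x = 0} \<le> \<eta>}) \<epsilon>
                \<subseteq> E"
        proof
          fix \<omega> assume w: "\<omega> \<in> (case \<zeta> of (\<nu>, t, y) \<Rightarrow> \<lambda>\<epsilon>. {\<omega> \<in> space M. detM u B \<nu> t y \<omega> \<le> \<epsilon> * vt * t powr (\<omega>' + 3) * \<nu> powr \<omega>'}) \<epsilon> -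
                         (case \<zeta> of (\<nu>, t, y) \<Rightarrow> \<lambda>\<epsilon>. {\<omega> \<in> space M. \<forall>s\<in>{0..t}. infdist (y + sqrt \<nu> * B s \<omega>) {x. deriv u x = 0} \<le> \<eta>}) \<epsilon>"
          then have w1: "\<omega> \<in> space M" and det: "detM u B \<nu> t y \<omega> \<le> \<epsilon> * vt * t powr (\<omega>' + 3) * \<nu> powr \<omega>'"
            and nb: "\<not> (\<forall>s\<in>{0..t}. infdist (y + sqrt \<nu> * B s \<omega>) A \<le> \<eta>)" using zz by (auto simp: A_def)
          show "\<omega> \<in> E"
          proof (rule ccontr)
            assume nE: "\<omega> \<notin> E"
            obtain s0 where s0: "0 \<le> s0" "s0 \<le> t" and s0i: "\<eta> < infdist (y + sqrt \<nu> * B s0 \<omega>) A" using nb by force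
            define L where "L = t / 2^m"
            have Lp: "0 < L" using t by (simp add: L_def)
            have Lt: "L \<le> t" using t by (simp add: L_def divide_le_eq)
            define a0 where "a0 = (if 0 \<le> s0 - L then s0 - L else 0)"
            have a00: "0 \<le> a0" and a0L: "a0 + L \<le> t" using s0 Lt by (auto simp: a0_def)
            have near: "\<delta> \<le> \<bar>deriv u (y + sqrt \<nu> * B s \<omega>)\<bar>" if sa: "a0 \<le> s" "s \<le> a0 + L" for s
            proof -
              have s01: "0 \<le> s" "s \<le> t" using sa a00 a0L by auto
              have ss: "\<bar>s - s0\<bar> \<le> t / 2^m" using sa s0 unfolding L_def[symmetric] by (auto simp: a0_def split: if_splits)
              have osc: "\<bar>B s \<omega> - B s0 \<omega>\<bar> \<le> 15 * \<beta>"
                by (rule Eset_osc[OF pcont[OF w1] t(1) b0 w1 nE[unfolded E_def] s01 s0 ss])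
              have "\<bar>(y + sqrt \<nu> * B s \<omega>) - (y + sqrt \<nu> * B s0 \<omega>)\<bar> = sqrt \<nu> * \<bar>B s \<omega> - B s0 \<omega>\<bar>"
                using nu by (simp add: abs_mult right_diff_distrib[symmetric])
              also have "\<dots> \<le> sqrt \<nu> * (15 * \<beta>)" using osc nu by (intro mult_left_mono) auto
              also have "\<dots> = \<eta> / 2" using nu by (simp add: \<beta>_def)
              finally have dd: "dist (y + sqrt \<nu> * B s0 \<omega>) (y + sqrt \<nu> * B s \<omega>) \<le> \<eta>/2"
                by (simp add: dist_real_def abs_minus_commute)
              have "infdist (y + sqrt \<nu> * B s0 \<omega>) A \<le> infdist (y + sqrt \<nu> * B s \<omega>) A + dist (y + sqrt \<nu> * B s0 \<omega>) (y + sqrt \<nu> * B s \<omega>)"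
                by (rule infdist_triangle)
              then have "\<eta>/2 \<le> infdist (y + sqrt \<nu> * B s \<omega>) A" using dd s0i by linarith
              then show ?thesis by (rule dA)
            qed
            have fc: "continuous_on {0..t} (\<lambda>s. deriv u (y + sqrt \<nu> * B s \<omega>))"
            proof -
              have "continuous_on {0..t} (\<lambda>s. B s \<omega>)" by (rule continuous_on_subset[OF pcont[OF w1]]) auto
              then have "continuous_on {0..t} (\<lambda>s. y + sqrt \<nu> * B s \<omega>)" by (intro continuous_intros)
              then show ?thesis by (rule continuous_on_compose2[OF cont]) auto
            qed
            have lo: "\<delta>^2 * L^3 / 64 \<le> detM u B \<nu> t y \<omega>"
              unfolding detM_def by (rule det_lower[OF fc a00 a0L Lp d near])
            have e8: "(2::real)^(m*3) = 8^m"
            proof -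
              have "(2::real)^(m*3) = (2^3)^m" by (metis power_mult mult.commute)
              then show ?thesis by simp
            qed
            have L3: "L^3 = t^3 * (1/8)^m"
              by (simp add: L_def power_divide power_mult[symmetric] mult.commute e8)
            have tp: "t powr (\<omega>' + 3) * \<nu> powr \<omega>' = t^3 * (t * \<nu>) powr \<omega>'"
              using t nu by (simp add: powr_add powr_mult)
            have "\<epsilon> * vt * t powr (\<omega>' + 3) * \<nu> powr \<omega>' = \<epsilon> * vt * (t powr (\<omega>' + 3) * \<nu> powr \<omega>')"
              by (simp only: mult.assoc)
            also have "\<dots> = \<epsilon> * vt * (t^3 * (t * \<nu>) powr \<omega>')" by (simp only: tp)
            also have "\<dots> = \<delta>^2 * t^3 * \<mu> / 64"
              unfolding \<mu>_def using d by (simp add: field_simps)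
            also have "\<dots> < \<delta>^2 * t^3 * (1/8)^m / 64"
              using m1 d t by (intro divide_strict_right_mono mult_strict_left_mono) auto
            also have "\<dots> = \<delta>^2 * L^3 / 64" unfolding L3 by (simp add: mult.assoc)
            finally show False using lo det by linarith
          qed
        qed
      qed
    qed
  qed
qed



lemma diff_cont:
  fixes g :: "real \<Rightarrow> real"
  assumes "\<And>x. g differentiable (at x)"
  shows "continuous_on UNIV g"
  by (rule continuous_at_imp_continuous_on) (use assms differentiable_imp_continuous_within in blast)

lemma tdist_le: "tdist x y \<le> \<bar>x - y\<bar>"
proof -
  have "tdist x y \<le> \<bar>x - y - 2 * pi * real_of_int 0\<bar>"
    unfolding tdist_def by (rule cINF_lower) (auto intro: bdd_belowI[of _ 0])
  then show ?thesis by simp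
qed

lemma implies_eps_subset:
  assumes "\<And>\<zeta> \<epsilon>. \<zeta> \<in> Z \<Longrightarrow> A \<zeta> \<epsilon> \<subseteq> B' \<zeta> \<epsilon>"
  shows "implies_eps M A B' Z"
  unfolding implies_eps_def almost_false_def
proof (intro allI impI)
  fix p :: real assume "0 < p"
  show "\<exists>C \<epsilon>0. C > 0 \<and> \<epsilon>0 > 0 \<and> (\<forall>\<zeta>\<in>Z. \<forall>\<epsilon>. 0 < \<epsilon> \<and> \<epsilon> \<le> \<epsilon>0 \<longrightarrow>
           (\<exists>E\<in>sets M. A \<zeta> \<epsilon> - B' \<zeta> \<epsilon> \<subseteq> E \<and> measure M E \<le> C * \<epsilon> powr p))"
    using assms by (intro exI[of _ 1]) (auto intro!: bexI[of _ "{}"])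
qed

lemma part2_bound:
  fixes u :: "real \<Rightarrow> real"
  assumes c2: "continuous_on UNIV (deriv (deriv u))" and per2: "\<And>x. deriv (deriv u) (x + 2*pi) = deriv (deriv u) x"
    and eta: "0 < \<eta>" and c4: "0 < c4"
    and loc: "\<And>z. tdist z y0 \<le> \<eta> \<Longrightarrow> \<bar>deriv (deriv u) z\<bar> \<le> c4 * tdist z y0 ^ (n - 1)"
  shows "\<exists>c>0. \<forall>x. \<bar>deriv (deriv u) x\<bar> \<le> c * \<bar>x - y0\<bar> ^ (n - 1)"
proof -
  obtain K where K: "\<And>x. \<bar>deriv (deriv u) x\<bar> \<le> K" using periodic_bounded[OF per2 c2] by blast
  have K0: "0 \<le> K" using K[of 0] by linarith
  define c where "c = max c4 (K / \<eta> ^ (n - 1))"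
  have "\<bar>deriv (deriv u) x\<bar> \<le> c * \<bar>x - y0\<bar> ^ (n - 1)" for x
  proof (cases "tdist x y0 \<le> \<eta>")
    case True
    have td0: "0 \<le> tdist x y0" unfolding tdist_def by (rule cINF_greatest) auto
    have "\<bar>deriv (deriv u) x\<bar> \<le> c4 * tdist x y0 ^ (n - 1)" by (rule loc[OF True])
    also have "\<dots> \<le> c4 * \<bar>x - y0\<bar> ^ (n - 1)"
      using c4 td0 tdist_le[of x y0] by (intro mult_left_mono power_mono) auto
    also have "\<dots> \<le> c * \<bar>x - y0\<bar> ^ (n - 1)" by (intro mult_right_mono) (auto simp: c_def)
    finally show ?thesis .
  next
    case False
    then have e1: "\<eta> \<le> \<bar>x - y0\<bar>" using tdist_le[of x y0] by linarith
    have "\<bar>deriv (deriv u) x\<bar> \<le> K" by (rule K)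
    also have "\<dots> = K / \<eta> ^ (n - 1) * \<eta> ^ (n - 1)" using eta by simp
    also have "\<dots> \<le> K / \<eta> ^ (n - 1) * \<bar>x - y0\<bar> ^ (n - 1)"
      using eta e1 K0 by (intro mult_left_mono power_mono) auto
    also have "\<dots> \<le> c * \<bar>x - y0\<bar> ^ (n - 1)" by (intro mult_right_mono) (auto simp: c_def)
    finally show ?thesis .
  qed
  moreover have "0 < c" using c4 by (simp add: c_def)
  ultimately show ?thesis by blast
qed

lemma hfun_bound:
  fixes u :: "real \<Rightarrow> real"
  assumes glob: "\<And>x. \<bar>deriv (deriv u) x\<bar> \<le> c * \<bar>x - y0\<bar> ^ k" and c: "0 < c"
    and pc: "continuous_on {0..} (\<lambda>s. B s \<omega>)" and t: "0 < t" and nu: "0 < \<nu>"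
  shows "hfun u B y \<nu> t \<omega> \<le> c * (SUP s\<in>{0..t}. \<bar>y - y0 + sqrt \<nu> * B s \<omega>\<bar> ^ k)"
proof -
  define F where "F = (\<lambda>s. \<bar>y - y0 + sqrt \<nu> * B s \<omega>\<bar> ^ k)"
  have Fc: "continuous_on {0..t} F" unfolding F_def
    by (intro continuous_intros continuous_on_subset[OF pc]) auto
  have bdd: "bdd_above (F ` {0..t})"
    by (rule bounded_imp_bdd_above, rule compact_imp_bounded, rule compact_continuous_image[OF Fc]) auto
  have up: "F s \<le> (SUP s\<in>{0..t}. F s)" if "s \<in> {0..t}" for s by (rule cSUP_upper[OF that bdd])
  show ?thesis unfolding hfun_def F_def[symmetric]
  proof (rule cSup_least)
    show "(\<lambda>(s, z, \<tau>). \<bar>deriv (deriv u) (y + sqrt \<nu> * (\<tau> * B s \<omega> + (1 - \<tau>) * B z \<omega>))\<bar>) ` ({0..t} \<times> {0..t} \<times> {0..1}) \<noteq> {}"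
      using t by auto
  next
    fix v assume "v \<in> (\<lambda>(s, z, \<tau>). \<bar>deriv (deriv u) (y + sqrt \<nu> * (\<tau> * B s \<omega> + (1 - \<tau>) * B z \<omega>))\<bar>) ` ({0..t} \<times> {0..t} \<times> {0..1})"
    then obtain s z \<tau> where sz: "s \<in> {0..t}" "z \<in> {0..t}" "\<tau> \<in> {0..1}"
      and v: "v = \<bar>deriv (deriv u) (y + sqrt \<nu> * (\<tau> * B s \<omega> + (1 - \<tau>) * B z \<omega>))\<bar>" by auto
    define a where "a = y - y0 + sqrt \<nu> * B s \<omega>"
    define b where "b = y - y0 + sqrt \<nu> * B z \<omega>"
    have P: "y + sqrt \<nu> * (\<tau> * B s \<omega> + (1 - \<tau>) * B z \<omega>) - y0 = \<tau> * a + (1 - \<tau>) * b"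
      by (simp add: a_def b_def algebra_simps)
    have "\<bar>\<tau> * a + (1 - \<tau>) * b\<bar> \<le> \<tau> * \<bar>a\<bar> + (1 - \<tau>) * \<bar>b\<bar>"
      using sz(3) by (metis abs_mult abs_of_nonneg abs_triangle_ineq atLeastAtMost_iff diff_ge_0_iff_ge)
    also have "\<dots> \<le> max \<bar>a\<bar> \<bar>b\<bar>"
    proof -
      have "\<tau> * \<bar>a\<bar> \<le> \<tau> * max \<bar>a\<bar> \<bar>b\<bar>" "(1 - \<tau>) * \<bar>b\<bar> \<le> (1 - \<tau>) * max \<bar>a\<bar> \<bar>b\<bar>"
        using sz(3) by (auto intro!: mult_left_mono)
      then show ?thesis by (simp add: algebra_simps)
    qed
    finally have Pb: "\<bar>\<tau> * a + (1 - \<tau>) * b\<bar> \<le> max \<bar>a\<bar> \<bar>b\<bar>" .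
    have "v \<le> c * \<bar>\<tau> * a + (1 - \<tau>) * b\<bar> ^ k" using glob[of "y + sqrt \<nu> * (\<tau> * B s \<omega> + (1 - \<tau>) * B z \<omega>)"] v P by simp
    also have "\<dots> \<le> c * (max \<bar>a\<bar> \<bar>b\<bar>) ^ k" using c Pb by (intro mult_left_mono power_mono) auto
    also have "\<dots> \<le> c * (SUP s\<in>{0..t}. F s)"
    proof -
      have "(max \<bar>a\<bar> \<bar>b\<bar>) ^ k \<le> (SUP s\<in>{0..t}. F s)"
      proof (cases "\<bar>a\<bar> \<le> \<bar>b\<bar>")
        case True then show ?thesis using up[OF sz(2)] by (simp add: max_def F_def b_def)
      next
        case False then show ?thesis using up[OF sz(1)] by (simp add: max_def F_def a_def)
      qed
      then show ?thesis using c by (intro mult_left_mono) auto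
    qed
    finally show "v \<le> c * (SUP s\<in>{0..t}. F s)" .
  qed
qed



theorem lemma2p4:
  fixes M :: "'a measure" and B :: "real \<Rightarrow> 'a \<Rightarrow> real" and u :: "real \<Rightarrow> real"
  assumes BM: "std_BM M B"
    and smooth: "smooth_periodic u"
    and fin_crit: "finite {x \<in> {0..<2 * pi}. deriv u x = 0}"
  shows
    "(\<exists>\<eta>0>0. \<forall>\<eta>. 0 < \<eta> \<and> \<eta> \<le> \<eta>0 \<longrightarrow>
       (\<forall>vt>0. \<forall>\<omega>'>0.
          implies_eps M
            (\<lambda>(\<nu>, t, y) \<epsilon>. {\<omega> \<in> space M. detM u B \<nu> t y \<omega> \<le> \<epsilon> * vt * t powr (\<omega>' + 3) * \<nu> powr \<omega>'})
            (\<lambda>(\<nu>, t, y) \<epsilon>. {\<omega> \<in> space M. \<forall>s\<in>{0..t}. infdist (y + sqrt \<nu> * B s \<omega>) {x. deriv u x = 0} \<le> \<eta>})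
            {(\<nu>, t, y). 0 < \<nu> \<and> \<nu> \<le> 1 \<and> 0 < t \<and> t \<le> 1 / \<nu>}))
     \<and>
     (\<forall>y0 (n::nat) \<eta> c1 c2 c3 c4.
        n \<ge> 1 \<and> (\<forall>k\<in>{1..n}. (deriv ^^ k) u y0 = 0) \<and> (deriv ^^ Suc n) u y0 \<noteq> 0 \<and>
        \<eta> > 0 \<and> c1 > 0 \<and> c2 > 0 \<and> c3 > 0 \<and> c4 > 0 \<and>
        (\<forall>z. tdist z y0 \<le> \<eta> \<longrightarrow>
           c1 * tdist z y0 ^ n \<le> \<bar>deriv u z\<bar> \<and> \<bar>deriv u z\<bar> \<le> c2 * tdist z y0 ^ n \<and>
           c3 * tdist z y0 ^ (n - 1) \<le> \<bar>deriv (deriv u) z\<bar> \<and>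
           \<bar>deriv (deriv u) z\<bar> \<le> c4 * tdist z y0 ^ (n - 1))
        \<longrightarrow>
        (\<exists>c>0. \<forall>vt>0. \<forall>\<omega>'>0.
           implies_eps M
             (\<lambda>(\<nu>, t, y) \<epsilon>. {\<omega> \<in> space M. detM u B \<nu> t y \<omega> \<le> \<epsilon> * vt * t powr (\<omega>' + 3) * \<nu> powr \<omega>'})
             (\<lambda>(\<nu>, t, y) \<epsilon>. {\<omega> \<in> space M.
                hfun u B y \<nu> t \<omega> \<le> c * (SUP s\<in>{0..t}. \<bar>y - y0 + sqrt \<nu> * B s \<omega>\<bar> ^ (n - 1))})
             {(\<nu>, t, y). 0 < \<nu> \<and> \<nu> \<le> 1 \<and> 0 < t \<and> t \<le> 1 / \<nu> \<and> \<bar>y - y0\<bar> < \<eta>}))"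
proof -
  have dk: "\<And>k x. (deriv ^^ k) u differentiable (at x)" using smooth by (simp add: smooth_periodic_def)
  have d0: "\<And>x. u differentiable (at x)" using dk[of 0] by simp
  have d1: "\<And>x. deriv u differentiable (at x)" using dk[of 1] by simp
  have d2: "\<And>x. deriv (deriv u) differentiable (at x)" using dk[of 2] by (simp add: numeral_2_eq_2)
  have per0: "\<And>x. u (x + 2 * pi) = u x" using smooth by (simp add: smooth_periodic_def)
  have per1: "\<And>x. deriv u (x + 2 * pi) = deriv u x" by (rule deriv_periodic[OF d0 per0])
  have per2: "\<And>x. deriv (deriv u) (x + 2 * pi) = deriv (deriv u) x" by (rule deriv_periodic[OF d1 per1])
  have cont1: "continuous_on UNIV (deriv u)" by (rule diff_cont[OF d1])
  have cont2: "continuous_on UNIV (deriv (deriv u))" by (rule diff_cont[OF d2])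
  have pcont: "continuous_on {0..} (\<lambda>s. B s \<omega>)" if "\<omega> \<in> space M" for \<omega>
    using BM that by (simp add: std_BM_def)
  show ?thesis
  proof (intro conjI)
    show "\<exists>\<eta>0>0. \<forall>\<eta>. 0 < \<eta> \<and> \<eta> \<le> \<eta>0 \<longrightarrow>
       (\<forall>vt>0. \<forall>\<omega>'>0.
          implies_eps M
            (\<lambda>(\<nu>, t, y) \<epsilon>. {\<omega> \<in> space M. detM u B \<nu> t y \<omega> \<le> \<epsilon> * vt * t powr (\<omega>' + 3) * \<nu> powr \<omega>'})
            (\<lambda>(\<nu>, t, y) \<epsilon>. {\<omega> \<in> space M. \<forall>s\<in>{0..t}. infdist (y + sqrt \<nu> * B s \<omega>) {x. deriv u x = 0} \<le> \<eta>})
            {(\<nu>, t, y). 0 < \<nu> \<and> \<nu> \<le> 1 \<and> 0 < t \<and> t \<le> 1 / \<nu>})"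
      using part1[OF BM cont1 per1] by (intro exI[of _ "1::real"]) auto
  next
    show "\<forall>y0 (n::nat) \<eta> c1 c2 c3 c4.
        n \<ge> 1 \<and> (\<forall>k\<in>{1..n}. (deriv ^^ k) u y0 = 0) \<and> (deriv ^^ Suc n) u y0 \<noteq> 0 \<and>
        \<eta> > 0 \<and> c1 > 0 \<and> c2 > 0 \<and> c3 > 0 \<and> c4 > 0 \<and>
        (\<forall>z. tdist z y0 \<le> \<eta> \<longrightarrow>
           c1 * tdist z y0 ^ n \<le> \<bar>deriv u z\<bar> \<and> \<bar>deriv u z\<bar> \<le> c2 * tdist z y0 ^ n \<and>
           c3 * tdist z y0 ^ (n - 1) \<le> \<bar>deriv (deriv u) z\<bar> \<and>
           \<bar>deriv (deriv u) z\<bar> \<le> c4 * tdist z y0 ^ (n - 1))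
        \<longrightarrow>
        (\<exists>c>0. \<forall>vt>0. \<forall>\<omega>'>0.
           implies_eps M
             (\<lambda>(\<nu>, t, y) \<epsilon>. {\<omega> \<in> space M. detM u B \<nu> t y \<omega> \<le> \<epsilon> * vt * t powr (\<omega>' + 3) * \<nu> powr \<omega>'})
             (\<lambda>(\<nu>, t, y) \<epsilon>. {\<omega> \<in> space M.
                hfun u B y \<nu> t \<omega> \<le> c * (SUP s\<in>{0..t}. \<bar>y - y0 + sqrt \<nu> * B s \<omega>\<bar> ^ (n - 1))})
             {(\<nu>, t, y). 0 < \<nu> \<and> \<nu> \<le> 1 \<and> 0 < t \<and> t \<le> 1 / \<nu> \<and> \<bar>y - y0\<bar> < \<eta>})"
    proof (intro allI impI)
      fix y0 :: real and n :: nat and \<eta> c1 c2 c3 c4 :: real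
      assume H: "n \<ge> 1 \<and> (\<forall>k\<in>{1..n}. (deriv ^^ k) u y0 = 0) \<and> (deriv ^^ Suc n) u y0 \<noteq> 0 \<and>
        \<eta> > 0 \<and> c1 > 0 \<and> c2 > 0 \<and> c3 > 0 \<and> c4 > 0 \<and>
        (\<forall>z. tdist z y0 \<le> \<eta> \<longrightarrow>
           c1 * tdist z y0 ^ n \<le> \<bar>deriv u z\<bar> \<and> \<bar>deriv u z\<bar> \<le> c2 * tdist z y0 ^ n \<and>
           c3 * tdist z y0 ^ (n - 1) \<le> \<bar>deriv (deriv u) z\<bar> \<and>
           \<bar>deriv (deriv u) z\<bar> \<le> c4 * tdist z y0 ^ (n - 1))"
      then have eta: "0 < \<eta>" and c4: "0 < c4"
        and loc: "\<And>z. tdist z y0 \<le> \<eta> \<Longrightarrow> \<bar>deriv (deriv u) z\<bar> \<le> c4 * tdist z y0 ^ (n - 1)" by auto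
      obtain c where c: "0 < c" and glob: "\<And>x. \<bar>deriv (deriv u) x\<bar> \<le> c * \<bar>x - y0\<bar> ^ (n - 1)"
        using part2_bound[OF cont2 per2 eta c4 loc] by blast
      show "\<exists>c>0. \<forall>vt>0. \<forall>\<omega>'>0.
           implies_eps M
             (\<lambda>(\<nu>, t, y) \<epsilon>. {\<omega> \<in> space M. detM u B \<nu> t y \<omega> \<le> \<epsilon> * vt * t powr (\<omega>' + 3) * \<nu> powr \<omega>'})
             (\<lambda>(\<nu>, t, y) \<epsilon>. {\<omega> \<in> space M.
                hfun u B y \<nu> t \<omega> \<le> c * (SUP s\<in>{0..t}. \<bar>y - y0 + sqrt \<nu> * B s \<omega>\<bar> ^ (n - 1))})
             {(\<nu>, t, y). 0 < \<nu> \<and> \<nu> \<le> 1 \<and> 0 < t \<and> t \<le> 1 / \<nu> \<and> \<bar>y - y0\<bar> < \<eta>}"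
      proof (rule exI[of _ c], intro conjI allI impI c implies_eps_subset)
        fix vt \<omega>' :: real and \<zeta> :: "real \<times> real \<times> real" and \<epsilon> :: real
        assume z: "\<zeta> \<in> {(\<nu>, t, y). 0 < \<nu> \<and> \<nu> \<le> 1 \<and> 0 < t \<and> t \<le> 1 / \<nu> \<and> \<bar>y - y0\<bar> < \<eta>}"
        obtain \<nu> t y where zz: "\<zeta> = (\<nu>, t, y)" by (cases \<zeta>) auto
        have nu: "0 < \<nu>" and t: "0 < t" using z zz by auto
        show "(case \<zeta> of (\<nu>, t, y) \<Rightarrow> \<lambda>\<epsilon>. {\<omega> \<in> space M. detM u B \<nu> t y \<omega> \<le> \<epsilon> * vt * t powr (\<omega>' + 3) * \<nu> powr \<omega>'}) \<epsilon>
           \<subseteq> (case \<zeta> of (\<nu>, t, y) \<Rightarrow> \<lambda>\<epsilon>. {\<omega> \<in> space M.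
                hfun u B y \<nu> t \<omega> \<le> c * (SUP s\<in>{0..t}. \<bar>y - y0 + sqrt \<nu> * B s \<omega>\<bar> ^ (n - 1))}) \<epsilon>"
          unfolding zz using hfun_bound[OF glob c pcont t nu] by auto
      qed
    qed
  qed
qed

end
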